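(* Let $\zeta\in G\setminus\{0\}$ and let $f,g:G\times G\to\mathbb{C}$ be functions such that $L_aL_b=f(a,b)L_{a+b}+g(a,b)L_{a+b+\zeta}$ ($a,b\in G$) defines a CLSAS on $\mathcal{W}$. Suppose that there exist $\gamma\in\mathbb{C}$ and $\lambda\in G$ with $\gamma\neq\lambda$ such that $f(a,b)=\lambda+b$ whenever $\lambda+a+b\neq0$ and $f(a,b)=\frac{(\lambda+b)(\gamma-\lambda-b)}{\gamma-\lambda}$ whenever $\lambda+a+b=0$. Then $g(a,b)=0$ for all $a,b\in G$.
   Context: $G$ is a free (additive) subgroup of $\mathbb{C}$ of rank $\nu>1$. The high rank Witt algebra $\mathcal{W}$ has basis $\{L_a\mid a\in G\}$ and bracket $[L_a,L_b]=(b-a)L_{a+b}$. A left-symmetric algebra is a complex vector space with bilinear product satisfying $(xy)z-x(yz)=(yx)z-y(xz)$; a compatible left-symmetric algebraic structure (CLSAS) on a Lie algebra $\mathfrak g$ is such a product on $\mathfrak g$ with $xy-yx=[x,y]$. *)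

theory Defs
  imports Complex_Main
begin

definition free_subgroup_rank_gt1 :: "complex set \<Rightarrow> bool" where
  "free_subgroup_rank_gt1 G \<longleftrightarrow>
     (\<exists>B. (\<forall>S k. finite S \<and> S \<subseteq> B \<and> (\<Sum>s\<in>S. of_int (k s) * s) = 0
                 \<longrightarrow> (\<forall>s\<in>S. k s = (0::int)))
        \<and> G = {\<Sum>s\<in>S. of_int (k s) * s | S k. finite S \<and> S \<subseteq> B}
        \<and> (infinite B \<or> card B \<ge> 2))"

text \<open>Elements of the Witt algebra W: finitely supported coefficient functions
  on G, x = sum over a of (x a) L_a.\<close>
definition witt_elem :: "complex set \<Rightarrow> (complex \<Rightarrow> complex) \<Rightarrow> bool" where
  "witt_elem G x \<longleftrightarrow> (\<forall>c. c \<notin> G \<longrightarrow> x c = 0) \<and> finite {c. x c \<noteq> 0}"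

definition Lb :: "complex \<Rightarrow> complex \<Rightarrow> complex" where
  "Lb a = (\<lambda>c. if c = a then 1 else 0)"

definition witt_bracket :: "(complex \<Rightarrow> complex) \<Rightarrow> (complex \<Rightarrow> complex) \<Rightarrow> complex \<Rightarrow> complex" where
  "witt_bracket x y = (\<lambda>c. \<Sum>a\<in>{a. x a \<noteq> 0}. \<Sum>b\<in>{b. y b \<noteq> 0}.
       x a * y b * (if c = a + b then b - a else 0))"

definition fg_prod :: "(complex \<Rightarrow> complex \<Rightarrow> complex) \<Rightarrow> (complex \<Rightarrow> complex \<Rightarrow> complex) \<Rightarrow> complex
    \<Rightarrow> (complex \<Rightarrow> complex) \<Rightarrow> (complex \<Rightarrow> complex) \<Rightarrow> complex \<Rightarrow> complex" where
  "fg_prod f g \<zeta> x y = (\<lambda>c. \<Sum>a\<in>{a. x a \<noteq> 0}. \<Sum>b\<in>{b. y b \<noteq> 0}.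
       x a * y b * ((if c = a + b then f a b else 0) + (if c = a + b + \<zeta> then g a b else 0)))"

definition is_CLSAS :: "complex set \<Rightarrow> ((complex \<Rightarrow> complex) \<Rightarrow> (complex \<Rightarrow> complex) \<Rightarrow> complex \<Rightarrow> complex) \<Rightarrow> bool" where
  "is_CLSAS G m \<longleftrightarrow>
     (\<forall>x y. witt_elem G x \<longrightarrow> witt_elem G y \<longrightarrow> witt_elem G (m x y)) \<and>
     (\<forall>x y z. witt_elem G x \<longrightarrow> witt_elem G y \<longrightarrow> witt_elem G z \<longrightarrow>
        m (m x y) z - m x (m y z) = m (m y x) z - m y (m x z)) \<and>
     (\<forall>x y. witt_elem G x \<longrightarrow> witt_elem G y \<longrightarrow> m x y - m y x = witt_bracket x y)"

end

theory Submission
  imports Defs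
begin


lemma avoid:
  assumes "infinite (G::complex set)" "finite F"
  shows "\<exists>c\<in>G. c \<notin> F"
proof -
  have "infinite (G - F)" using assms Diff_infinite_finite by blast
  then obtain c where "c \<in> G - F" using infinite_imp_nonempty by blast
  then show ?thesis by blast
qed

lemma math_core:
  fixes G :: "complex set" and \<zeta> \<gamma> lam :: complex
    and f g :: "complex \<Rightarrow> complex \<Rightarrow> complex"
  assumes G0: "0 \<in> G" and Gadd: "\<And>x y. x \<in> G \<Longrightarrow> y \<in> G \<Longrightarrow> x + y \<in> G"
    and Gneg: "\<And>x. x \<in> G \<Longrightarrow> - x \<in> G" and Ginf: "infinite G"
    and zG: "\<zeta> \<in> G" and z0: "\<zeta> \<noteq> 0"
    and lG: "lam \<in> G" and gl: "\<gamma> \<noteq> lam"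
    and f1: "\<And>a b. a \<in> G \<Longrightarrow> b \<in> G \<Longrightarrow> lam + a + b \<noteq> 0 \<Longrightarrow> f a b = lam + b"
    and f2: "\<And>a b. a \<in> G \<Longrightarrow> b \<in> G \<Longrightarrow> lam + a + b = 0 \<Longrightarrow>
           f a b = (lam + b) * (\<gamma> - lam - b) / (\<gamma> - lam)"
    and Sym: "\<And>a b. a \<in> G \<Longrightarrow> b \<in> G \<Longrightarrow> g a b = g b a"
    and E: "\<And>a b c. a \<in> G \<Longrightarrow> b \<in> G \<Longrightarrow> c \<in> G \<Longrightarrow>
      f a b * g (a+b) c + g a b * f (a+b+\<zeta>) c - (f b c * g a (b+c) + g b c * f a (b+c+\<zeta>))
      = f b a * g (a+b) c + g b a * f (a+b+\<zeta>) c - (f a c * g b (a+c) + g a c * f b (a+c+\<zeta>))"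
    and Q: "\<And>a b c. a \<in> G \<Longrightarrow> b \<in> G \<Longrightarrow> c \<in> G \<Longrightarrow>
      g a b * g (a+b+\<zeta>) c - g b c * g a (b+c+\<zeta>) = g b a * g (a+b+\<zeta>) c - g a c * g b (a+c+\<zeta>)"
  shows "\<forall>a\<in>G. \<forall>b\<in>G. g a b = 0"
proof -
  have Gsub: "x - y \<in> G" if "x \<in> G" "y \<in> G" for x y
    using Gadd[OF that(1) Gneg[OF that(2)]] by simp
  have gld: "\<gamma> - lam \<noteq> 0" using gl by simp
  have F0: "f 0 y = lam + y" if "y \<in> G" for y
  proof (cases "lam + 0 + y = 0")
    case True then show ?thesis using f2[OF G0 that] by simp
  next
    case False then show ?thesis using f1[OF G0 that] by simp
  qed
  have Fd: "f b a = f a b - (b - a)" if "a \<in> G" "b \<in> G" for a b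
  proof (cases "lam + a + b = 0")
    case True
    then have "lam + b + a = 0" by (simp add: algebra_simps)
    then have e: "f b a = (lam + a) * (\<gamma> - lam - a) / (\<gamma> - lam)" using f2[OF that(2,1)] by simp
    have l: "lam = - a - b"
    proof - have "lam = (lam + a + b) - a - b" by simp then show ?thesis using True by simp qed
    have "(lam + b) * (\<gamma> - lam - b) - (lam + a) * (\<gamma> - lam - a) = (b - a) * (\<gamma> - lam)"
      unfolding l by (simp add: algebra_simps)
    then have "f a b - f b a = b - a" using f2[OF that True] e gld
      by (simp add: diff_divide_distrib[symmetric])
    then show ?thesis by (simp add: algebra_simps)
  next
    case False
    then have "lam + b + a \<noteq> 0" by (simp add: algebra_simps)
    then show ?thesis using f1[OF that False] f1[OF that(2,1)] by simp
  qed
  define \<phi> where "\<phi> x = g 0 x" for x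
  have A: "\<zeta> * g b c = \<phi> c * f b (c+\<zeta>) - f b c * \<phi> (b+c)" if "b \<in> G" "c \<in> G" for b c
  proof -
    have bz: "b + \<zeta> \<in> G" "b + c \<in> G" "b+c+\<zeta> \<in> G" "c+\<zeta> \<in> G" using Gadd that zG by auto
    have e: "f 0 b * g b c + g 0 b * f (b+\<zeta>) c - (f b c * g 0 (b+c) + g b c * f 0 (b+c+\<zeta>))
      = f b 0 * g b c + g b 0 * f (b+\<zeta>) c - (f 0 c * g b c + g 0 c * f b (c+\<zeta>))"
      using E[OF G0 that] by (simp add: add.assoc)
    have h1: "f b 0 = lam" using Fd[OF G0 that(1)] F0[OF that(1)] by simp
    have h2: "f 0 b = lam + b" "f 0 c = lam + c" "f 0 (b+c+\<zeta>) = lam+b+c+\<zeta>" using F0 bz that by auto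
    have h3: "g b 0 = \<phi> b" "g 0 b = \<phi> b" "g 0 c = \<phi> c" "g 0 (b+c) = \<phi> (b+c)"
      unfolding \<phi>_def using Sym[OF that(1) G0] by auto
    have e2: "(lam + b) * g b c + \<phi> b * f (b+\<zeta>) c - (f b c * \<phi> (b+c) + g b c * (lam+b+c+\<zeta>))
      = lam * g b c + \<phi> b * f (b+\<zeta>) c - ((lam+c) * g b c + \<phi> c * f b (c+\<zeta>))"
      using e unfolding h1 h2 h3 .
    have "\<zeta> * g b c - (\<phi> c * f b (c+\<zeta>) - f b c * \<phi> (b+c)) =
      (lam * g b c + \<phi> b * f (b+\<zeta>) c - ((lam+c) * g b c + \<phi> c * f b (c+\<zeta>)))
      - ((lam + b) * g b c + \<phi> b * f (b+\<zeta>) c - (f b c * \<phi> (b+c) + g b c * (lam+b+c+\<zeta>)))"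
      by (simp add: algebra_simps)
    then show ?thesis using e2 by simp
  qed
  define w where "w = - lam - \<zeta>"
  have wG: "w \<in> G" unfolding w_def using Gsub Gneg lG zG by simp
  have fgen: "f b (c+\<zeta>) = lam + c + \<zeta>" if "b \<in> G" "c \<in> G" "b + c \<noteq> w" for b c
  proof -
    have "lam + b + (c + \<zeta>) = (b + c) - w" unfolding w_def by (simp add: algebra_simps)
    then have "lam + b + (c + \<zeta>) \<noteq> 0" using that(3) by (metis eq_iff_diff_eq_0)
    then show ?thesis using f1[OF that(1) Gadd[OF that(2) zG]] by simp
  qed
  have R: "\<phi> c * f b (c+\<zeta>) - \<phi> b * f c (b+\<zeta>) = (c - b) * \<phi> (b+c)" if "b \<in> G" "c \<in> G" for b c
  proof -
    have 1: "\<zeta> * g b c = \<phi> c * f b (c+\<zeta>) - f b c * \<phi> (b+c)" using A that by simp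
    have 2: "\<zeta> * g b c = \<phi> b * f c (b+\<zeta>) - f c b * \<phi> (b+c)"
      using A[OF that(2,1)] Sym[OF that] by (simp add: add.commute)
    have 3: "f c b = f b c - (c - b)" using Fd[OF that] .
    have 4: "\<phi> b * f c (b+\<zeta>) - (f b c - (c - b)) * \<phi> (b+c) = \<phi> c * f b (c+\<zeta>) - f b c * \<phi> (b+c)"
      using 1 2 3 by simp
    have i: "(\<phi> c * f b (c+\<zeta>) - \<phi> b * f c (b+\<zeta>)) - (c - b) * \<phi> (b+c) =
      (\<phi> c * f b (c+\<zeta>) - f b c * \<phi> (b+c)) - (\<phi> b * f c (b+\<zeta>) - (f b c - (c - b)) * \<phi> (b+c))" by algebra
    have "(\<phi> c * f b (c+\<zeta>) - \<phi> b * f c (b+\<zeta>)) - (c - b) * \<phi> (b+c) = 0"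
      unfolding i 4 by simp
    then show ?thesis by simp
  qed
  obtain p where Pp: "\<And>x. x \<in> G \<Longrightarrow> x \<noteq> w \<Longrightarrow> \<phi> x = p"
  proof (cases "lam + \<zeta> = 0")
    case False
    have "\<phi> x = \<phi> 0" if "x \<in> G" "x \<noteq> w" for x
    proof -
      have r: "\<phi> x * f 0 (x+\<zeta>) - \<phi> 0 * f x (0+\<zeta>) = (x - 0) * \<phi> (0+x)" using R[OF G0 that(1)] .
      have a: "f 0 (x+\<zeta>) = lam + x + \<zeta>" using F0 Gadd that zG by (simp add: add.assoc)
      have b: "f x (0+\<zeta>) = lam + 0 + \<zeta>" using fgen[OF that(1) G0] that by simp
      have "(lam + \<zeta>) * (\<phi> x - \<phi> 0) = 0" using r unfolding a b by (simp add: algebra_simps)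
      then show ?thesis using False by simp
    qed
    then show ?thesis using that by blast
  next
    case True
    then have lz: "lam = - \<zeta>" by (simp add: eq_neg_iff_add_eq_0)
    have w0: "w = 0" unfolding w_def lz by simp
    have gzl: "\<gamma> + \<zeta> \<noteq> 0" using gl lz by (simp add: eq_neg_iff_add_eq_0)
    have R': "c * \<phi> c - b * \<phi> b = (c - b) * \<phi> (b+c)" if "b \<in> G" "c \<in> G" "b + c \<noteq> 0" for b c
    proof -
      have "f b (c+\<zeta>) = lam + c + \<zeta>" using fgen[OF that(1,2)] that w0 by simp
      moreover have "c + b \<noteq> w" using that w0 by (simp add: add.commute)
      then have "f c (b+\<zeta>) = lam + b + \<zeta>" using fgen[OF that(2,1)] by simp
      ultimately have "f b (c+\<zeta>) = c" "f c (b+\<zeta>) = b" using lz by simp_all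
      then show ?thesis using R[OF that(1,2)] by (simp add: mult.commute)
    qed
    define u where "u = \<phi> \<zeta>"
    define v where "v = \<phi> (-\<zeta>)"
    have aff: "2 * \<zeta> * \<phi> x = (\<zeta> + x) * u + (\<zeta> - x) * v" if "x \<in> G" "x \<noteq> 0" for x
    proof (cases "x = - \<zeta>")
      case True then show ?thesis unfolding v_def by simp
    next
      case False
      have e1: "\<zeta> * u - x * \<phi> x = (\<zeta> - x) * \<phi> (x + \<zeta>)"
        using R'[OF that(1) zG] False unfolding u_def by (simp add: eq_neg_iff_add_eq_0)
      have e2: "(-\<zeta>) * v - (x+\<zeta>) * \<phi> (x+\<zeta>) = (-\<zeta> - (x+\<zeta>)) * \<phi> x"
        using R'[OF Gadd[OF that(1) zG] Gneg[OF zG]] that unfolding v_def by simp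
      have i: "\<zeta> * (2 * \<zeta> * \<phi> x - ((\<zeta> + x) * u + (\<zeta> - x) * v)) =
        -(\<zeta>+x) * ((\<zeta> * u - x * \<phi> x) - (\<zeta> - x) * \<phi> (x + \<zeta>))
        + (\<zeta>-x) * (((-\<zeta>) * v - (x+\<zeta>) * \<phi> (x+\<zeta>)) - (-\<zeta> - (x+\<zeta>)) * \<phi> x)" by algebra
      have "\<zeta> * (2 * \<zeta> * \<phi> x - ((\<zeta> + x) * u + (\<zeta> - x) * v)) = 0" unfolding i e1 e2 by simp
      then show ?thesis using z0 by simp
    qed
    have S0: "\<phi> (-b) * (\<gamma> + b) + \<phi> b * (\<gamma> - b) = 2 * (\<gamma> + \<zeta>) * \<phi> 0" if "b \<in> G" "b \<noteq> 0" for b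
    proof -
      have r: "\<phi> (-b) * f b (-b+\<zeta>) - \<phi> b * f (-b) (b+\<zeta>) = (-b - b) * \<phi> (b + -b)"
        using R[OF that(1) Gneg[OF that(1)]] .
      have fa: "f b (-b+\<zeta>) = (lam + (-b+\<zeta>)) * (\<gamma> - lam - (-b+\<zeta>)) / (\<gamma> - lam)"
        by (rule f2) (use that zG Gadd Gneg lz Gsub[OF zG that(1)] in auto)
      have fb: "f (-b) (b+\<zeta>) = (lam + (b+\<zeta>)) * (\<gamma> - lam - (b+\<zeta>)) / (\<gamma> - lam)"
        by (rule f2) (use that zG Gadd Gneg lz Gsub[OF zG that(1)] in auto)
      have fa': "f b (-b+\<zeta>) = - b * (\<gamma> + b) / (\<gamma> + \<zeta>)" unfolding fa lz by (simp add: algebra_simps)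
      have fb': "f (-b) (b+\<zeta>) = b * (\<gamma> - b) / (\<gamma> + \<zeta>)" unfolding fb lz by (simp add: algebra_simps)
      define t1 where "t1 = \<phi> (-b) * (- b * (\<gamma> + b))"
      define t2 where "t2 = \<phi> b * (b * (\<gamma> - b))"
      have r1: "\<phi> (-b) * f b (-b+\<zeta>) - \<phi> b * f (-b) (b+\<zeta>) = (t1 - t2) / (\<gamma> + \<zeta>)"
        unfolding fa' fb' t1_def t2_def by (simp add: diff_divide_distrib)
      have "(t1 - t2) / (\<gamma> + \<zeta>) = (-b - b) * \<phi> 0" using r r1 by simp
      then have r2: "t1 - t2 = (-b - b) * \<phi> 0 * (\<gamma> + \<zeta>)" using gzl by (simp add: divide_eq_eq)
      have i: "b * (\<phi> (-b) * (\<gamma> + b) + \<phi> b * (\<gamma> - b) - 2 * (\<gamma> + \<zeta>) * \<phi> 0)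
        = - ((t1 - t2) - (-b - b) * \<phi> 0 * (\<gamma> + \<zeta>))" unfolding t1_def t2_def by algebra
      have "b * (\<phi> (-b) * (\<gamma> + b) + \<phi> b * (\<gamma> - b) - 2 * (\<gamma> + \<zeta>) * \<phi> 0) = 0"
        unfolding i r2 by simp
      then show ?thesis using that by simp
    qed
    have z2a: "2*\<zeta> \<in> G" using Gadd[OF zG zG] by (metis mult_2)
    have z2: "2*\<zeta> \<in> G" "-(2*\<zeta>) \<in> G" using z2a Gneg[OF z2a] by auto
    have s1: "v * (\<gamma> + \<zeta>) + u * (\<gamma> - \<zeta>) = 2 * (\<gamma> + \<zeta>) * \<phi> 0"
      using S0[OF zG z0] unfolding u_def v_def .
    have s2: "\<phi> (-(2*\<zeta>)) * (\<gamma> + 2*\<zeta>) + \<phi> (2*\<zeta>) * (\<gamma> - 2*\<zeta>) = 2 * (\<gamma> + \<zeta>) * \<phi> 0"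
      using S0[OF z2(1)] z0 by simp
    have a1: "2 * \<zeta> * \<phi> (2*\<zeta>) = (\<zeta> + 2*\<zeta>) * u + (\<zeta> - 2*\<zeta>) * v" using aff[OF z2(1)] z0 by simp
    have a2: "2 * \<zeta> * \<phi> (-(2*\<zeta>)) = (\<zeta> + -(2*\<zeta>)) * u + (\<zeta> - -(2*\<zeta>)) * v" using aff[OF z2(2)] z0 by simp
    have i: "6 * \<zeta> * \<zeta> * (v - u) =
       2*\<zeta> * ((\<phi> (-(2*\<zeta>)) * (\<gamma> + 2*\<zeta>) + \<phi> (2*\<zeta>) * (\<gamma> - 2*\<zeta>)) - 2 * (\<gamma> + \<zeta>) * \<phi> 0)
     - 2*\<zeta> * ((v * (\<gamma> + \<zeta>) + u * (\<gamma> - \<zeta>)) - 2 * (\<gamma> + \<zeta>) * \<phi> 0)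
     - (\<gamma> + 2*\<zeta>) * (2 * \<zeta> * \<phi> (-(2*\<zeta>)) - ((\<zeta> + -(2*\<zeta>)) * u + (\<zeta> - -(2*\<zeta>)) * v))
     - (\<gamma> - 2*\<zeta>) * (2 * \<zeta> * \<phi> (2*\<zeta>) - ((\<zeta> + 2*\<zeta>) * u + (\<zeta> - 2*\<zeta>) * v))" by algebra
    have "6 * \<zeta> * \<zeta> * (v - u) = 0" unfolding i s1 s2 a1 a2 by simp
    then have uv: "u = v" using z0 by simp
    have "\<phi> x = u" if "x \<in> G" "x \<noteq> w" for x
    proof -
      have "2 * \<zeta> * \<phi> x = 2 * \<zeta> * u" using aff that w0 uv by (simp add: algebra_simps)
      then show ?thesis using z0 by simp
    qed
    then show ?thesis using that by blast
  qed
  have lwG: "-lam \<in> G" using Gneg lG by simp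
  have p0: "p = 0"
  proof -
    obtain c where cG: "c \<in> G" and cF: "c \<notin> {0, -lam, w, w - \<zeta>}"
      using avoid[OF Ginf, of "{0, -lam, w, w - \<zeta>}"] by auto
    define b where "b = -lam - c"
    have bG: "b \<in> G" unfolding b_def using Gsub lwG cG by simp
    have czG: "c + \<zeta> \<in> G" using Gadd cG zG by simp
    have bc: "b + c = -lam" unfolding b_def by simp
    have q: "g 0 b * g (0+b+\<zeta>) c - g b c * g 0 (b+c+\<zeta>) = g b 0 * g (0+b+\<zeta>) c - g 0 c * g b (0+c+\<zeta>)"
      using Q[OF G0 bG cG] .
    have q': "g b c * \<phi> (b+c+\<zeta>) = \<phi> c * g b (c+\<zeta>)"
      using q Sym[OF G0 bG] unfolding \<phi>_def by simp
    have pc: "\<phi> c = p" using Pp cG cF by auto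
    have czw: "c + \<zeta> \<noteq> w"
    proof
      assume "c + \<zeta> = w" then have "c = w - \<zeta>" by (simp add: eq_diff_eq)
      then show False using cF by simp
    qed
    have pcz: "\<phi> (c+\<zeta>) = p" using Pp[OF czG czw] .
    have pl: "\<phi> (-lam) = p" using Pp[OF lwG] z0 unfolding w_def by auto
    have plz: "\<phi> (b+c+\<zeta>) = p"
    proof -
      have "b+c+\<zeta> \<noteq> w" using z0 unfolding bc w_def by (simp add: algebra_simps)
      then show ?thesis using Pp Gadd bG cG zG by auto
    qed
    have a1: "\<zeta> * g b c = \<phi> c * f b (c+\<zeta>) - f b c * \<phi> (b+c)" using A bG cG by simp
    have a2: "\<zeta> * g b (c+\<zeta>) = \<phi> (c+\<zeta>) * f b (c+\<zeta>+\<zeta>) - f b (c+\<zeta>) * \<phi> (b+(c+\<zeta>))"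
      using A bG czG by simp
    have "b + c \<noteq> w" unfolding bc w_def using z0 by simp
    then have f1': "f b (c+\<zeta>) = lam + c + \<zeta>" using fgen[OF bG cG] by simp
    have f2': "f b (c+\<zeta>+\<zeta>) = lam + (c + \<zeta>) + \<zeta>"
    proof (rule fgen[OF bG czG])
      show "b + (c + \<zeta>) \<noteq> w" using z0 bc unfolding w_def by (auto simp: algebra_simps)
    qed
    have f3: "f b c = (lam + c) * (\<gamma> - lam - c) / (\<gamma> - lam)"
    proof (rule f2[OF bG cG])
      show "lam + b + c = 0" using bc by (simp add: add.assoc)
    qed
    have "b + (c + \<zeta>) = b + c + \<zeta>" by (simp add: add.assoc)
    then have a2': "\<zeta> * g b (c+\<zeta>) = \<zeta> * p" using a2 pcz plz f1' f2' by (simp add: algebra_simps)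
    have gbz: "g b (c+\<zeta>) = p" using a2' z0 by simp
    have a1': "\<zeta> * g b c = p * (lam + c + \<zeta>) - f b c * p" using a1 pc pl f1' bc by simp
    have "\<zeta> * (g b c * p) = \<zeta> * (p * p)" using q' plz pc gbz by simp
    then have "(p * (lam + c + \<zeta>) - f b c * p) * p = \<zeta> * (p * p)" using a1' by (simp add: mult.assoc[symmetric])
    then have "p * p * ((lam + c) * (\<gamma> - lam) - (lam + c) * (\<gamma> - lam - c)) = 0"
      unfolding f3 using gld by (simp add: field_simps)
    moreover have "(lam + c) * (\<gamma> - lam) - (lam + c) * (\<gamma> - lam - c) = (lam + c) * c"
      by (simp add: algebra_simps)
    moreover have "lam + c \<noteq> 0" using cF by (auto simp: eq_neg_iff_add_eq_0 add.commute)
    ultimately show ?thesis using cF by simp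
  qed
  have phi0: "\<phi> x = 0" if "x \<in> G" "x \<noteq> w" for x using Pp that p0 by simp
  have phiw: "\<phi> w = 0"
  proof -
    obtain c where cG: "c \<in> G" and cF: "c \<notin> {0, w, w/2}"
      using avoid[OF Ginf, of "{0, w, w/2}"] by auto
    define b where "b = w - c"
    have bG: "b \<in> G" unfolding b_def using Gsub wG cG by simp
    have bw: "b \<noteq> w" using cF unfolding b_def by auto
    have r: "\<phi> c * f b (c+\<zeta>) - \<phi> b * f c (b+\<zeta>) = (c - b) * \<phi> (b+c)" using R bG cG by simp
    then have "(c - b) * \<phi> w = 0" using phi0 bG cG bw cF unfolding b_def by simp
    moreover have "c - b \<noteq> 0" using cF unfolding b_def by (auto simp: field_simps)
    ultimately show ?thesis by simp
  qed
  have phiall: "\<phi> x = 0" if "x \<in> G" for x using phi0 phiw that by blast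
  show ?thesis
  proof (intro ballI)
    fix b c assume "b \<in> G" "c \<in> G"
    then have "\<zeta> * g b c = 0" using A phiall Gadd by simp
    then show "g b c = 0" using z0 by simp
  qed
qed


lemma G_props:
  assumes "free_subgroup_rank_gt1 G"
  shows "0 \<in> G" "\<And>x y. x \<in> G \<Longrightarrow> y \<in> G \<Longrightarrow> x + y \<in> G" "\<And>x. x \<in> G \<Longrightarrow> -x \<in> G" "infinite G"
proof -
  obtain B where ind: "\<forall>S k. finite S \<and> S \<subseteq> B \<and> (\<Sum>s\<in>S. of_int (k s) * s) = 0
                 \<longrightarrow> (\<forall>s\<in>S. k s = (0::int))"
    and GB: "G = {\<Sum>s\<in>S. of_int (k s) * s | S k. finite S \<and> S \<subseteq> B}"
    and card: "infinite B \<or> card B \<ge> 2"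
    using assms unfolding free_subgroup_rank_gt1_def by blast
  show "0 \<in> G" unfolding GB by (rule CollectI, rule exI[of _ "{}"]) auto
  show "x + y \<in> G" if xy: "x \<in> G" "y \<in> G" for x y
  proof -
    obtain S1 k1 where 1: "x = (\<Sum>s\<in>S1. of_int (k1 s) * s)" "finite S1" "S1 \<subseteq> B" using xy(1) GB by auto
    obtain S2 k2 where 2: "y = (\<Sum>s\<in>S2. of_int (k2 s) * s)" "finite S2" "S2 \<subseteq> B" using xy(2) GB by auto
    define k where "k s = (if s \<in> S1 then k1 s else 0) + (if s \<in> S2 then k2 s else 0)" for s
    have "(\<Sum>s\<in>S1 \<union> S2. of_int (k s) * s) =
      (\<Sum>s\<in>S1 \<union> S2. of_int (if s \<in> S1 then k1 s else 0) * s) + (\<Sum>s\<in>S1 \<union> S2. of_int (if s \<in> S2 then k2 s else 0) * s)"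
      unfolding k_def by (simp add: sum.distrib distrib_right)
    also have "(\<Sum>s\<in>S1 \<union> S2. of_int (if s \<in> S1 then k1 s else 0) * s) = (\<Sum>s\<in>S1. of_int (k1 s) * s)"
      by (rule sum.mono_neutral_cong_right) (use 1 2 in auto)
    also have "(\<Sum>s\<in>S1 \<union> S2. of_int (if s \<in> S2 then k2 s else 0) * s) = (\<Sum>s\<in>S2. of_int (k2 s) * s)"
      by (rule sum.mono_neutral_cong_right) (use 1 2 in auto)
    finally have "x + y = (\<Sum>s\<in>S1 \<union> S2. of_int (k s) * s)" using 1 2 by simp
    then show ?thesis unfolding GB using 1 2 by blast
  qed
  show "- x \<in> G" if xG: "x \<in> G" for x
  proof -
    obtain S1 k1 where 1: "x = (\<Sum>s\<in>S1. of_int (k1 s) * s)" "finite S1" "S1 \<subseteq> B" using xG GB by auto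
    have "- x = (\<Sum>s\<in>S1. of_int ((\<lambda>s. - k1 s) s) * s)" unfolding 1 by (simp add: sum_negf)
    then show ?thesis unfolding GB mem_Collect_eq
      by (intro exI[of _ S1] conjI exI[of _ "\<lambda>s. - k1 s"]) (use 1 in auto)
  qed
  have "B \<noteq> {}" using card by auto
  then obtain s where sB: "s \<in> B" by blast
  have s0: "s \<noteq> 0"
  proof
    assume "s = 0"
    then have h: "finite {s} \<and> {s} \<subseteq> B \<and> (\<Sum>t\<in>{s}. of_int ((\<lambda>_. 1::int) t) * t) = 0" using sB by simp
    have "\<forall>t\<in>{s}. (\<lambda>_. 1::int) t = 0" using ind[rule_format, of "{s}" "\<lambda>_. 1"] h by auto
    then show False by simp
  qed
  have inG: "of_int n * s \<in> G" for n :: int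
    unfolding GB using sB by (intro CollectI exI[of _ "{s}"] exI[of _ "\<lambda>_. n"]) auto
  have "inj (\<lambda>n::int. of_int n * s)" using s0 by (auto intro: injI)
  then have "infinite (range (\<lambda>n::int. of_int n * s))" using finite_imageD infinite_UNIV_int by blast
  moreover have "range (\<lambda>n::int. of_int n * s) \<subseteq> G" using inG by auto
  ultimately show "infinite G" using finite_subset by blast
qed



lemma fg_sum:
  assumes S: "finite S" "{a. x a \<noteq> 0} \<subseteq> S" and T: "finite T" "{b. y b \<noteq> 0} \<subseteq> T"
  shows "fg_prod f g z x y t = (\<Sum>a\<in>S. \<Sum>b\<in>T. x a * y b *
       ((if t = a + b then f a b else 0) + (if t = a + b + z then g a b else 0)))"
proof -
  let ?K = "\<lambda>a b. ((if t = a + b then f a b else 0) + (if t = a + b + z then g a b else 0))"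
  have fx: "finite {a. x a \<noteq> 0}" using S finite_subset by blast
  have fy: "finite {b. y b \<noteq> 0}" using T finite_subset by blast
  have inner: "(\<Sum>b\<in>{b. y b \<noteq> 0}. x a * y b * ?K a b) = (\<Sum>b\<in>T. x a * y b * ?K a b)" for a
    by (rule sum.mono_neutral_left) (use T in auto)
  have "fg_prod f g z x y t = (\<Sum>a\<in>{a. x a \<noteq> 0}. \<Sum>b\<in>T. x a * y b * ?K a b)"
    unfolding fg_prod_def using inner by simp
  also have "\<dots> = (\<Sum>a\<in>S. \<Sum>b\<in>T. x a * y b * ?K a b)"
    by (rule sum.mono_neutral_left) (use S in auto)
  finally show ?thesis .
qed

lemma supp_Lb: "{c. Lb a c \<noteq> 0} = {a}" unfolding Lb_def by auto

lemma LL: "fg_prod f g z (Lb a) (Lb b) t = (if t = a + b then f a b else 0) + (if t = a + b + z then g a b else 0)"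
  by (subst fg_sum[of "{a}" _ "{b}"]) (auto simp: supp_Lb Lb_def)

lemma left2:
  assumes "{c. u c \<noteq> 0} \<subseteq> {p1, p2}" "p1 \<noteq> p2"
  shows "fg_prod f g z u (Lb c) t = u p1 * fg_prod f g z (Lb p1) (Lb c) t + u p2 * fg_prod f g z (Lb p2) (Lb c) t"
  unfolding LL by (subst fg_sum[of "{p1,p2}" _ "{c}"]) (use assms in \<open>auto simp: supp_Lb Lb_def\<close>)

lemma right2:
  assumes "{c. u c \<noteq> 0} \<subseteq> {p1, p2}" "p1 \<noteq> p2"
  shows "fg_prod f g z (Lb a) u t = u p1 * fg_prod f g z (Lb a) (Lb p1) t + u p2 * fg_prod f g z (Lb a) (Lb p2) t"
  unfolding LL by (subst fg_sum[of "{a}" _ "{p1,p2}"]) (use assms in \<open>auto simp: supp_Lb Lb_def\<close>)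

lemma supp_LL: "z \<noteq> 0 \<Longrightarrow> {c. fg_prod f g z (Lb a) (Lb b) c \<noteq> 0} \<subseteq> {a+b, a+b+z}"
  by (auto simp: LL split: if_splits)

lemma LLL: "z \<noteq> 0 \<Longrightarrow> fg_prod f g z (fg_prod f g z (Lb a) (Lb b)) (Lb c) t =
   f a b * fg_prod f g z (Lb (a+b)) (Lb c) t + g a b * fg_prod f g z (Lb (a+b+z)) (Lb c) t"
  by (subst left2[OF supp_LL]) (auto simp: LL)

lemma LLR: "z \<noteq> 0 \<Longrightarrow> fg_prod f g z (Lb a) (fg_prod f g z (Lb b) (Lb c)) t =
   f b c * fg_prod f g z (Lb a) (Lb (b+c)) t + g b c * fg_prod f g z (Lb a) (Lb (b+c+z)) t"
  by (subst right2[OF supp_LL]) (auto simp: LL)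

lemma br: "witt_bracket (Lb a) (Lb b) t = (if t = a + b then b - a else 0)"
  unfolding witt_bracket_def supp_Lb by (simp add: Lb_def)

lemma welem: "a \<in> G \<Longrightarrow> witt_elem G (Lb a)"
  unfolding witt_elem_def supp_Lb by (auto simp: Lb_def)



theorem proposition4p3:
  fixes G :: "complex set" and \<zeta> \<gamma> lam :: complex
    and f g :: "complex \<Rightarrow> complex \<Rightarrow> complex"
  assumes "free_subgroup_rank_gt1 G"
    and "\<zeta> \<in> G" and "\<zeta> \<noteq> 0"
    and "is_CLSAS G (fg_prod f g \<zeta>)"
    and "lam \<in> G" and "\<gamma> \<noteq> lam"
    and "\<And>a b. a \<in> G \<Longrightarrow> b \<in> G \<Longrightarrow> lam + a + b \<noteq> 0 \<Longrightarrow> f a b = lam + b"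
    and "\<And>a b. a \<in> G \<Longrightarrow> b \<in> G \<Longrightarrow> lam + a + b = 0 \<Longrightarrow>
           f a b = (lam + b) * (\<gamma> - lam - b) / (\<gamma> - lam)"
  shows "\<forall>a\<in>G. \<forall>b\<in>G. g a b = 0"
proof -
  note GP = G_props[OF assms(1)]
  note z0 = assms(3)
  let ?P = "fg_prod f g \<zeta>"
  have LS: "?P (?P x y) z - ?P x (?P y z) = ?P (?P y x) z - ?P y (?P x z)"
    if "witt_elem G x" "witt_elem G y" "witt_elem G z" for x y z
    using assms(4) that unfolding is_CLSAS_def by blast
  have CP: "?P x y - ?P y x = witt_bracket x y" if "witt_elem G x" "witt_elem G y" for x y
    using assms(4) that unfolding is_CLSAS_def by blast
  have Sym: "g a b = g b a" if "a \<in> G" "b \<in> G" for a b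
  proof -
    have "?P (Lb a) (Lb b) (a+b+\<zeta>) - ?P (Lb b) (Lb a) (a+b+\<zeta>) = witt_bracket (Lb a) (Lb b) (a+b+\<zeta>)"
      using fun_cong[OF CP[OF welem[OF that(1)] welem[OF that(2)]], of "a+b+\<zeta>"] by simp
    then show ?thesis using z0 by (simp add: LL br algebra_simps)
  qed
  have E: "f a b * g (a+b) c + g a b * f (a+b+\<zeta>) c - (f b c * g a (b+c) + g b c * f a (b+c+\<zeta>))
      = f b a * g (a+b) c + g b a * f (a+b+\<zeta>) c - (f a c * g b (a+c) + g a c * f b (a+c+\<zeta>))"
    if "a \<in> G" "b \<in> G" "c \<in> G" for a b c
  proof -
    have "?P (?P (Lb a) (Lb b)) (Lb c) (a+b+c+\<zeta>) - ?P (Lb a) (?P (Lb b) (Lb c)) (a+b+c+\<zeta>) =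
          ?P (?P (Lb b) (Lb a)) (Lb c) (a+b+c+\<zeta>) - ?P (Lb b) (?P (Lb a) (Lb c)) (a+b+c+\<zeta>)"
      using fun_cong[OF LS[OF welem[OF that(1)] welem[OF that(2)] welem[OF that(3)]], of "a+b+c+\<zeta>"] by simp
    then show ?thesis using z0 by (simp add: LLL LLR LL algebra_simps)
  qed
  have Q: "g a b * g (a+b+\<zeta>) c - g b c * g a (b+c+\<zeta>) = g b a * g (a+b+\<zeta>) c - g a c * g b (a+c+\<zeta>)"
    if "a \<in> G" "b \<in> G" "c \<in> G" for a b c
  proof -
    have "?P (?P (Lb a) (Lb b)) (Lb c) (a+b+c+\<zeta>+\<zeta>) - ?P (Lb a) (?P (Lb b) (Lb c)) (a+b+c+\<zeta>+\<zeta>) =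
          ?P (?P (Lb b) (Lb a)) (Lb c) (a+b+c+\<zeta>+\<zeta>) - ?P (Lb b) (?P (Lb a) (Lb c)) (a+b+c+\<zeta>+\<zeta>)"
      using fun_cong[OF LS[OF welem[OF that(1)] welem[OF that(2)] welem[OF that(3)]], of "a+b+c+\<zeta>+\<zeta>"] by simp
    then show ?thesis using z0 by (simp add: LLL LLR LL algebra_simps)
  qed
  show ?thesis
    by (rule math_core[OF GP assms(2,3,5,6,7,8) Sym E Q]) (auto)
qed


end
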